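(* Assume $\|\mathbf{x}_t\|_\infty\le1$ for all $t$. Let $\mathbf{v}\in\mathbb{R}^d$ be any vector (fixed given $B_1,\dots,B_{\tau-1}$) and $\mathbf{z}_\tau=\mathbf{h}_{\tau^2}\mathbf{v}-\mathbf{x}_{\tau^2}\mathbf{x}_{\tau^2}^\top\mathbf{v}$. Then for all $i\in[d]$, $$|z_{\tau,i}|\le\frac{(d-1)(d-2)}{(k-1)(k-2)}\|\mathbf{v}\|_1,\qquad\mathbb{E}_\tau[z_{\tau,i}^2]\le\Big(\frac{(d-1)(d-2)}{(k-1)(k-2)}-1\Big)\|\mathbf{v}\|_2^2+\Big(\frac{d-1}{k-1}-1\Big)\big(\|\mathbf{v}\|_1^2-\|\mathbf{v}\|_2^2\big).$$
   Context: Integers $3\le k\le d-3$, $[d]=\{1,\dots,d\}$. SAMPLING$(k,d,\mathbf{w})$ for nonzero $\mathbf{w}\in\mathbb{R}^d$: with $q_i=|w_i|/\|\mathbf{w}\|_1$, draw $I_1\in[d]$ with $\mathbb{P}(I_1=i)=q_i$, then $k-1$ distinct indices uniformly without replacement from $[d]\setminus\{I_1\}$; output the $k$-set $B$. At round $\tau$, $B_\tau=$SAMPLING$(k,d,\hat{\mathbf{w}}_{\tau-1})$ for a nonzero vector $\hat{\mathbf{w}}_{\tau-1}$ determined by $B_1,\dots,B_{\tau-1}$ ($\hat{\mathbf{w}}_0=\frac1d\mathbf{1}_d$). $\mathbb{P}$ and $\mathbb{E}_\tau[\cdot]=\mathbb{E}[\cdot\mid B_1,\dots,B_{\tau-1}]$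 are over $B_\tau$. The instance $\mathbf{x}_{\tau^2}\in\mathbb{R}^d$ is fixed given the past; $h_{\tau^2}[i,i]=\frac{x_{\tau^2,i}^2}{\mathbb{P}[i\in B_\tau]}\mathbb{I}_{i\in B_\tau}$ and $h_{\tau^2}[i,j]=\frac{x_{\tau^2,i}x_{\tau^2,j}}{\mathbb{P}[i,j\in B_\tau]}\mathbb{I}_{i,j\in B_\tau}$ for $i\ne j$. *)

theory Defs
  imports "HOL-Probability.Probability"
begin

text \<open>Vectors in R^d are functions nat => real, indexed by [d] = {1..d}.\<close>

definition l1norm :: "nat \<Rightarrow> (nat \<Rightarrow> real) \<Rightarrow> real" where
  "l1norm d v = (\<Sum>j\<in>{1..d}. \<bar>v j\<bar>)"

definition l2norm_sq :: "nat \<Rightarrow> (nat \<Rightarrow> real) \<Rightarrow> real" where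
  "l2norm_sq d v = (\<Sum>j\<in>{1..d}. (v j)\<^sup>2)"

definition first_index :: "nat \<Rightarrow> (nat \<Rightarrow> real) \<Rightarrow> nat pmf" where
  "first_index d w = embed_pmf (\<lambda>i. if i \<in> {1..d} then \<bar>w i\<bar> / l1norm d w else 0)"

text \<open>SAMPLING(k,d,w): draw I_1, then k-1 distinct indices uniformly without
  replacement from [d] - {I_1} (equivalently a uniform (k-1)-subset).\<close>
definition SAMPLING :: "nat \<Rightarrow> nat \<Rightarrow> (nat \<Rightarrow> real) \<Rightarrow> nat set pmf" where
  "SAMPLING k d w = bind_pmf (first_index d w)
     (\<lambda>i. map_pmf (insert i) (pmf_of_set {S. S \<subseteq> {1..d} - {i} \<and> card S = k - 1}))"

definition hmat :: "nat \<Rightarrow> nat \<Rightarrow> (nat \<Rightarrow> real) \<Rightarrow> (nat \<Rightarrow> real) \<Rightarrow> nat set \<Rightarrow> nat \<Rightarrow> nat \<Rightarrow> real" where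
  "hmat k d w x B i j =
     (if i = j then
        (x i)\<^sup>2 / measure_pmf.prob (SAMPLING k d w) {C. i \<in> C} * (if i \<in> B then 1 else 0)
      else
        x i * x j / measure_pmf.prob (SAMPLING k d w) {C. i \<in> C \<and> j \<in> C}
          * (if i \<in> B \<and> j \<in> B then 1 else 0))"

definition zvec :: "nat \<Rightarrow> nat \<Rightarrow> (nat \<Rightarrow> real) \<Rightarrow> (nat \<Rightarrow> real) \<Rightarrow> (nat \<Rightarrow> real) \<Rightarrow> nat set \<Rightarrow> nat \<Rightarrow> real" where
  "zvec k d w x v B i =
     (\<Sum>j\<in>{1..d}. hmat k d w x B i j * v j) - x i * (\<Sum>j\<in>{1..d}. x j * v j)"

end

theory Submission
  imports Defs
begin


lemma measure_bind_pmf_eq: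
  "measure_pmf.prob (bind_pmf M f) X = (\<integral>x. measure_pmf.prob (f x) X \<partial>measure_pmf M)"
  unfolding measure_pmf_bind
  using measurable_measure_pmf[of f]
  by (subst measure_pmf.measure_bind[where N="count_space UNIV"]) auto

lemma count_sup:
  assumes "finite U" "T \<subseteq> U"
  shows "card {S. S \<subseteq> U \<and> card S = m \<and> T \<subseteq> S}
     = (if card T \<le> m then (card U - card T) choose (m - card T) else 0)"
proof (cases "card T \<le> m")
  case True
  have fT: "finite T" using assms finite_subset by blast
  have "bij_betw (\<lambda>S. S - T) {S. S \<subseteq> U \<and> card S = m \<and> T \<subseteq> S} {R. R \<subseteq> U - T \<and> card R = m - card T}"
  proof (rule bij_betw_byWitness[where f'="\<lambda>R. R \<union> T"])
    show "\<forall>a\<in>{S. S \<subseteq> U \<and> card S = m \<and> T \<subseteq> S}. a - T \<union> T = a" by auto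
    show "\<forall>a'\<in>{R. R \<subseteq> U - T \<and> card R = m - card T}. a' \<union> T - T = a'" by auto
    show "(\<lambda>S. S - T) ` {S. S \<subseteq> U \<and> card S = m \<and> T \<subseteq> S} \<subseteq> {R. R \<subseteq> U - T \<and> card R = m - card T}"
      using fT by (auto simp: card_Diff_subset)
    show "(\<lambda>R. R \<union> T) ` {R. R \<subseteq> U - T \<and> card R = m - card T} \<subseteq> {S. S \<subseteq> U \<and> card S = m \<and> T \<subseteq> S}"
    proof clarify
      fix R assume R: "R \<subseteq> U - T" "card R = m - card T"
      have "finite R" using R assms finite_subset by (meson Diff_subset subset_trans)
      then have "card (R \<union> T) = card R + card T" using R fT by (subst card_Un_disjoint) auto
      then show "R \<union> T \<subseteq> U \<and> card (R \<union> T) = m \<and> T \<subseteq> R \<union> T" using R True assms by auto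
    qed
  qed
  then have "card {S. S \<subseteq> U \<and> card S = m \<and> T \<subseteq> S} = card {R. R \<subseteq> U - T \<and> card R = m - card T}"
    by (rule bij_betw_same_card)
  also have "\<dots> = card (U - T) choose (m - card T)" using assms by (simp add: n_subsets)
  finally show ?thesis using True assms fT by (simp add: card_Diff_subset)
next
  case False
  have e: "{S. S \<subseteq> U \<and> card S = m \<and> T \<subseteq> S} = {}"
  proof safe
    fix S assume "S \<subseteq> U" "T \<subseteq> S" "m = card S"
    then have "card T \<le> card S" using assms by (meson card_mono finite_subset)
    with False \<open>m = card S\<close> show "S \<in> {}" by simp
  qed
  show ?thesis using False unfolding e by simp
qed

definition G :: "nat \<Rightarrow> nat \<Rightarrow> nat \<Rightarrow> real" where
  "G n m t = real (if t \<le> m then (n - t) choose (m - t) else 0) / real (n choose m)"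

lemma inner_prob:
  assumes "a \<in> {1..d}" "T \<subseteq> {1..d}" "k \<le> d"
  shows "measure_pmf.prob (map_pmf (insert a) (pmf_of_set {S. S \<subseteq> {1..d} - {a} \<and> card S = k - 1})) {C. T \<subseteq> C}
     = G (d-1) (k-1) (card (T - {a}))"
proof -
  define U where "U = {1..d} - {a}"
  define X where "X = {S. S \<subseteq> U \<and> card S = k - 1}"
  have fU: "finite U" and cU: "card U = d - 1" using assms by (auto simp: U_def)
  have fX: "finite X" unfolding X_def using fU by (simp add: finite_subset[OF _ finite_Collect_subsets[OF fU]])
  have cX: "card X = (d - 1) choose (k - 1)" unfolding X_def using fU cU by (simp add: n_subsets)
  have "0 < (d - 1) choose (k - 1)" using assms by simp
  then have Xne: "X \<noteq> {}" using cX by auto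
  have eq: "X \<inter> insert a -` {C. T \<subseteq> C} = {S. S \<subseteq> U \<and> card S = k - 1 \<and> T - {a} \<subseteq> S}"
    unfolding X_def U_def by auto
  have cnt: "card {S. S \<subseteq> U \<and> card S = k - 1 \<and> T - {a} \<subseteq> S}
     = (if card (T - {a}) \<le> k - 1 then (card U - card (T - {a})) choose (k - 1 - card (T - {a})) else 0)"
    by (rule count_sup) (use fU assms in \<open>auto simp: U_def\<close>)
  have m: "measure_pmf.prob (map_pmf (insert a) (pmf_of_set X)) {C. T \<subseteq> C}
      = card (X \<inter> insert a -` {C. T \<subseteq> C}) / card X"
    unfolding measure_map_pmf by (rule measure_pmf_of_set[OF Xne fX])
  show ?thesis
    unfolding U_def[symmetric] X_def[symmetric] m eq cnt cU cX G_def by simp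
qed

lemma l1norm_pos:
  assumes "\<exists>j\<in>{1..d}. w j \<noteq> 0"
  shows "l1norm d w > 0"
proof -
  obtain j where j: "j \<in> {1..d}" "w j \<noteq> 0" using assms by blast
  have "0 < \<bar>w j\<bar>" using j by simp
  also have "\<dots> \<le> l1norm d w" unfolding l1norm_def
    by (rule member_le_sum) (use j in auto)
  finally show ?thesis .
qed

lemma pmf_first:
  assumes "\<exists>j\<in>{1..d}. w j \<noteq> 0"
  shows "pmf (first_index d w) a = (if a \<in> {1..d} then \<bar>w a\<bar> / l1norm d w else 0)"
proof -
  define f where "f = (\<lambda>i. if i \<in> {1..d} then \<bar>w i\<bar> / l1norm d w else 0)"
  have pos: "l1norm d w > 0" using l1norm_pos[OF assms] .
  have nn: "\<And>x. 0 \<le> f x" unfolding f_def using pos by auto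
  have s: "(\<Sum>x\<in>{1..d}. f x) = 1"
    unfolding f_def using pos by (simp add: sum_divide_distrib[symmetric] l1norm_def)
  have "(\<integral>\<^sup>+x. ennreal (f x) \<partial>count_space UNIV) = (\<Sum>x\<in>{1..d}. ennreal (f x))"
    by (rule nn_integral_count_space') (auto simp: f_def)
  also have "\<dots> = ennreal (\<Sum>x\<in>{1..d}. f x)" using nn by (simp add: sum_ennreal)
  finally have "(\<integral>\<^sup>+x. ennreal (f x) \<partial>count_space UNIV) = 1" using s by simp
  then show ?thesis unfolding first_index_def f_def[symmetric]
    using pmf_embed_pmf[of f, OF nn] by (simp add: f_def)
qed

lemma prob_formula:
  assumes "\<exists>j\<in>{1..d}. w j \<noteq> 0" "T \<subseteq> {1..d}" "k \<le> d"
  shows "measure_pmf.prob (SAMPLING k d w) {C. T \<subseteq> C}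
    = (\<Sum>a\<in>{1..d}. \<bar>w a\<bar> / l1norm d w * G (d-1) (k-1) (card (T - {a})))"
proof -
  have sp: "a \<in> {1..d}" if "a \<in> set_pmf (first_index d w)" for a
    using that pmf_first[OF assms(1), of a] by (auto simp: set_pmf_iff split: if_splits)
  show ?thesis
    unfolding SAMPLING_def measure_bind_pmf_eq
    apply (subst integral_measure_pmf[of "{1..d}"])
    using sp apply auto[2]
    apply (rule sum.cong[OF refl])
    subgoal for a
    proof -
      assume a: "a \<in> {1..d}"
      show ?thesis unfolding inner_prob[OF a assms(2,3)] pmf_first[OF assms(1)] using a by simp
    qed
    done
qed

lemma sum_split:
  fixes q :: "nat \<Rightarrow> real" and g :: "nat \<Rightarrow> real"
  assumes "finite U" "T \<subseteq> U" "(\<Sum>a\<in>U. q a) = 1"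
  shows "(\<Sum>a\<in>U. q a * g (card (T - {a}))) = g (card T) + (\<Sum>a\<in>T. q a) * (g (card T - 1) - g (card T))"
proof -
  have fT: "finite T" using assms finite_subset by blast
  define c where "c = g (card T - 1) - g (card T)"
  have "(\<Sum>a\<in>U. q a * g (card (T - {a}))) = (\<Sum>a\<in>U. q a * g (card T) + (if a \<in> T then q a * c else 0))"
    by (rule sum.cong[OF refl]) (auto simp: fT card_Diff_singleton algebra_simps c_def)
  also have "\<dots> = (\<Sum>a\<in>U. q a) * g (card T) + (\<Sum>a\<in>U \<inter> T. q a * c)"
    by (simp add: sum.distrib sum_distrib_right sum.inter_restrict[OF assms(1)])
  also have "U \<inter> T = T" using assms by auto
  finally show ?thesis using assms by (simp add: sum_distrib_right c_def)
qed

lemma ratio2: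
  fixes A B C n n1 m m1 :: real
  assumes "A > 0" "n > 0" "n1 > 0" "m * A = n * B" "m1 * B = n1 * C"
  shows "C / A = m * m1 / (n * n1)"
proof -
  have "C = m1 * B / n1" using assms by (simp add: field_simps)
  also have "B = m * A / n" using assms by (simp add: field_simps)
  finally show ?thesis using assms by (simp add: field_simps)
qed

lemma ratio3:
  fixes A B C E n n1 n2 m m1 m2 :: real
  assumes "A > 0" "n > 0" "n1 > 0" "n2 > 0" "m * A = n * B" "m1 * B = n1 * C" "m2 * C = n2 * E"
  shows "E / A = m * m1 * m2 / (n * n1 * n2)"
proof -
  have "E = m2 * C / n2" using assms by (simp add: field_simps)
  also have "C = m1 * B / n1" using assms by (simp add: field_simps)
  also have "B = m * A / n" using assms by (simp add: field_simps)
  finally show ?thesis using assms by (simp add: field_simps)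
qed

lemma G_vals:
  assumes "2 \<le> m" "m + 3 \<le> n"
  shows "G n m 0 = 1" "G n m 1 = real m / real n"
    "G n m 2 = real m * real (m - 1) / (real n * real (n - 1))"
    "G n m 3 = real m * real (m - 1) * real (m - 2) / (real n * real (n - 1) * real (n - 2))"
proof -
  have pos: "0 < n choose m" using assms by simp
  have e1: "m * (n choose m) = n * ((n - 1) choose (m - 1))" using assms by (simp add: times_binomial_minus1_eq)
  have e2: "(m - 1) * ((n - 1) choose (m - 1)) = (n - 1) * ((n - 2) choose (m - 2))"
    using assms times_binomial_minus1_eq[of "m - 1" "n - 1"] by (simp add: diff_diff_left numeral_2_eq_2)
  have e3: "(m - 2) * ((n - 2) choose (m - 2)) = (n - 2) * ((n - 3) choose (m - 3))" if "3 \<le> m"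
    using that assms times_binomial_minus1_eq[of "m - 2" "n - 2"] by (simp add: diff_diff_left numeral_2_eq_2 numeral_3_eq_3)
  have r1: "real m * real (n choose m) = real n * real ((n - 1) choose (m - 1))"
    using arg_cong[OF e1, of real] by simp
  have r2: "real (m - 1) * real ((n - 1) choose (m - 1)) = real (n - 1) * real ((n - 2) choose (m - 2))"
    using arg_cong[OF e2, of real] by simp
  have nz: "real n \<noteq> 0" "real (n - 1) \<noteq> 0" "real (n - 2) \<noteq> 0" using assms by auto
  have cp: "real (n choose m) > 0" using pos by simp
  show "G n m 0 = 1" using pos by (simp add: G_def)
  show g1: "G n m 1 = real m / real n"
    using assms r1 nz cp by (simp add: G_def field_simps)
  have np: "real n > 0" "real (n - 1) > 0" "real (n - 2) > 0" using assms by auto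
  have G2: "G n m 2 = real ((n-2) choose (m-2)) / real (n choose m)" using assms by (simp add: G_def)
  show g2: "G n m 2 = real m * real (m - 1) / (real n * real (n - 1))"
    unfolding G2 by (rule ratio2[OF cp np(1,2) r1 r2])
  show "G n m 3 = real m * real (m - 1) * real (m - 2) / (real n * real (n - 1) * real (n - 2))"
  proof (cases "3 \<le> m")
    case True
    have r3: "real (m - 2) * real ((n - 2) choose (m - 2)) = real (n - 2) * real ((n - 3) choose (m - 3))"
      using arg_cong[OF e3[OF True], of real] by simp
    have G3: "G n m 3 = real ((n-3) choose (m-3)) / real (n choose m)" using assms True by (simp add: G_def)
    show ?thesis unfolding G3 by (rule ratio3[OF cp np r1 r2 r3])
  next
    case False
    then have "m = 2" using assms by simp
    then show ?thesis by (simp add: G_def)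
  qed
qed



lemma ratio_bounds:
  fixes a1 a2 a3 s t u :: real
  assumes a2p: "0 < a2" and a21: "a2 \<le> a1" and a1le: "a1 \<le> 1" and a3n: "0 \<le> a3" and a32: "a3 \<le> a2"
    and c1: "a1 * a3 \<le> a2 ^ 2" and c2: "(2 * a1 - 1) * a2 \<le> a3" and c3: "(2 * a1 - 1) * a1 \<le> a2"
    and st: "0 \<le> s" "0 \<le> t" "0 \<le> u" "s + t + u \<le> 1"
  shows "\<bar>(a3 + (s + t + u) * (a2 - a3)) / ((a2 + (s + t) * (a1 - a2)) * (a2 + (s + u) * (a1 - a2))) - 1\<bar>
         \<le> 1 / a1 - 1"
proof -
  define dl where "dl = a1 - a2"
  define Q where "Q = s + t + u"
  define pij where "pij = a2 + (s + t) * dl"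
  define pil where "pil = a2 + (s + u) * dl"
  define P where "P = a3 + Q * (a2 - a3)"
  have dl0: "0 \<le> dl" using a21 by (simp add: dl_def)
  have a1p: "0 < a1" using a2p a21 by simp
  have pij_ge: "a2 \<le> pij" using dl0 st by (simp add: pij_def)
  have pil_ge: "a2 \<le> pil" using dl0 st by (simp add: pil_def)
  have pil_le: "pil \<le> a1" proof -
    have "(s + u) * dl \<le> 1 * dl" using st dl0 by (intro mult_right_mono) auto
    then show ?thesis by (simp add: pil_def dl_def)
  qed
  have pp: "0 < pij * pil" using pij_ge pil_ge a2p by simp
  have prod_ge: "a2 ^ 2 + a2 * dl * Q \<le> pij * pil"
  proof -
    have "pij * pil = a2 ^ 2 + a2 * dl * (2 * s + t + u) + dl ^ 2 * ((s + t) * (s + u))"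
      by (simp add: pij_def pil_def power2_eq_square algebra_simps)
    moreover have "a2 * dl * Q \<le> a2 * dl * (2 * s + t + u)"
      using a2p dl0 st by (intro mult_left_mono) (auto simp: Q_def)
    moreover have "0 \<le> dl ^ 2 * ((s + t) * (s + u))" using st by simp
    ultimately show ?thesis by linarith
  qed
  have Q1: "Q \<le> 1" "0 \<le> Q" using st by (auto simp: Q_def)
  have upper: "P * a1 \<le> pij * pil"
  proof -
    have "P * a1 = a1 * a3 + Q * (a1 * a2 - a1 * a3)" by (simp add: P_def algebra_simps)
    also have "\<dots> \<le> a2 ^ 2 + a2 * dl * Q"
    proof -
      have "0 \<le> (a2 ^ 2 - a1 * a3) * (1 - Q)" using c1 Q1 by simp
      then show ?thesis by (simp add: dl_def power2_eq_square algebra_simps)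
    qed
    finally show ?thesis using prod_ge by linarith
  qed
  have R_le: "P / (pij * pil) \<le> 1 / a1"
    using upper pp a1p by (simp add: divide_simps mult.commute)
  have lower: "(2 - 1 / a1) * (pij * pil) \<le> P"
  proof (cases "2 * a1 - 1 \<le> 0")
    case True
    then have "2 - 1 / a1 \<le> 0" using a1p by (simp add: divide_simps)
    moreover have "0 \<le> P" using a3n a32 Q1 by (simp add: P_def)
    ultimately show ?thesis using pp by (meson dual_order.trans mult_nonpos_nonneg less_imp_le)
  next
    case False
    have "(2 - 1 / a1) * (pij * pil) = ((2 - 1 / a1) * pij) * pil" by simp
    also have "\<dots> \<le> ((2 - 1 / a1) * pij) * a1"
      using False pil_le pij_ge a2p a1p by (intro mult_left_mono) (auto simp: divide_simps)
    also have "\<dots> = (2 * a1 - 1) * pij" using a1p by (simp add: field_simps)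
    also have "\<dots> = (1 - (s + t)) * ((2 * a1 - 1) * a2) + (s + t) * ((2 * a1 - 1) * a1)"
      by (simp add: pij_def dl_def algebra_simps)
    also have "\<dots> \<le> (1 - (s + t)) * a3 + (s + t) * a2"
      using c2 c3 st by (intro add_mono mult_left_mono) auto
    also have "\<dots> \<le> P"
    proof -
      have "(s + t) * (a2 - a3) \<le> Q * (a2 - a3)" using a32 st by (intro mult_right_mono) (auto simp: Q_def)
      then show ?thesis by (simp add: P_def algebra_simps)
    qed
    finally show ?thesis .
  qed
  have R_ge: "2 - 1 / a1 \<le> P / (pij * pil)"
    using lower pp by (simp add: divide_simps)
  have "\<bar>P / (pij * pil) - 1\<bar> \<le> 1 / a1 - 1" using R_le R_ge by linarith
  then show ?thesis by (simp add: P_def pij_def pil_def Q_def dl_def)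
qed

lemma consts_ineq:
  fixes K D :: real
  assumes "3 \<le> K" "K + 3 \<le> D"
  defines "a1 \<equiv> (K - 1) / (D - 1)"
    and "a2 \<equiv> (K - 1) * (K - 2) / ((D - 1) * (D - 2))"
    and "a3 \<equiv> (K - 1) * (K - 2) * (K - 3) / ((D - 1) * (D - 2) * (D - 3))"
  shows "0 < a2" "a2 \<le> a1" "a1 \<le> 1" "0 \<le> a3" "a3 \<le> a2" "a1 * a3 \<le> a2 ^ 2"
    "(2 * a1 - 1) * a2 \<le> a3" "(2 * a1 - 1) * a1 \<le> a2"
proof -
  define r1 where "r1 = (K - 1) / (D - 1)"
  define r2 where "r2 = (K - 2) / (D - 2)"
  define r3 where "r3 = (K - 3) / (D - 3)"
  have A1: "a1 = r1" and A2: "a2 = r1 * r2" and A3: "a3 = r1 * r2 * r3"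
    by (simp_all add: a1_def a2_def a3_def r1_def r2_def r3_def)
  have r1p: "0 < r1" "r1 \<le> 1" using assms by (auto simp: r1_def divide_simps)
  have r2p: "0 < r2" "r2 \<le> r1" using assms by (auto simp: r1_def r2_def divide_simps algebra_simps)
  have r3p: "0 \<le> r3" "r3 \<le> r2" using assms by (auto simp: r3_def r2_def divide_simps algebra_simps)
  have e1: "2 * r1 - 1 \<le> r2"
  proof -
    have h: "0 \<le> (D - K) * (D - 3)" using assms by simp
    show ?thesis using assms h by (simp add: r1_def r2_def divide_simps algebra_simps)
  qed
  have e2: "2 * r1 - 1 \<le> r3"
  proof -
    have h: "0 \<le> (D - K) * (D - 5)" using assms by simp
    show ?thesis using assms h by (simp add: r1_def r3_def divide_simps algebra_simps)
  qed
  show "0 < a2" using A2 r1p r2p by simp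
  show "a2 \<le> a1" using A1 A2 r1p r2p by (simp add: mult_left_le)
  show "a1 \<le> 1" using A1 r1p by simp
  show "0 \<le> a3" using A3 r1p r2p r3p by simp
  show "a3 \<le> a2" using A2 A3 r1p r2p r3p by (simp add: mult_left_le)
  show "a1 * a3 \<le> a2 ^ 2"
  proof -
    have "r1 * (r1 * r2) * r3 \<le> r1 * (r1 * r2) * r2" using r1p r2p r3p by (intro mult_left_mono) auto
    then show ?thesis using A1 A2 A3 by (simp add: power2_eq_square mult_ac)
  qed
  show "(2 * a1 - 1) * a2 \<le> a3"
  proof -
    have "(2 * r1 - 1) * (r1 * r2) \<le> r3 * (r1 * r2)" using e2 r1p r2p by (intro mult_right_mono) auto
    then show ?thesis using A1 A2 A3 by (simp add: algebra_simps)
  qed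
  show "(2 * a1 - 1) * a1 \<le> a2"
  proof -
    have "(2 * r1 - 1) * r1 \<le> r2 * r1" using e1 r1p by (intro mult_right_mono) auto
    then show ?thesis using A1 A2 by (simp add: algebra_simps)
  qed
qed



theorem corollary2:
  fixes k d :: nat and w x v :: "nat \<Rightarrow> real" and i :: nat
  assumes "3 \<le> k" and "k + 3 \<le> d"
    and "\<exists>j\<in>{1..d}. w j \<noteq> 0"
    and "\<forall>j\<in>{1..d}. \<bar>x j\<bar> \<le> 1"
    and "i \<in> {1..d}"
  shows "(\<forall>B\<in>set_pmf (SAMPLING k d w).
            \<bar>zvec k d w x v B i\<bar>
              \<le> (real (d - 1) * real (d - 2)) / (real (k - 1) * real (k - 2)) * l1norm d v)
       \<and> measure_pmf.expectation (SAMPLING k d w) (\<lambda>B. (zvec k d w x v B i)\<^sup>2)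
           \<le> ((real (d - 1) * real (d - 2)) / (real (k - 1) * real (k - 2)) - 1) * l2norm_sq d v
             + (real (d - 1) / real (k - 1) - 1) * ((l1norm d v)\<^sup>2 - l2norm_sq d v)"
proof -
  note k3 = assms(1) and kd3 = assms(2) and wnz = assms(3) and xb = assms(4) and iD = assms(5)
  have kd: "k \<le> d" using kd3 by simp
  define M where "M = SAMPLING k d w"
  define q where "q a = \<bar>w a\<bar> / l1norm d w" for a
  define Pr where "Pr T = measure_pmf.prob M {C. T \<subseteq> C}" for T
  define a1 where "a1 = real (k - 1) / real (d - 1)"
  define a2 where "a2 = real (k - 1) * real (k - 2) / (real (d - 1) * real (d - 2))"
  define a3 where "a3 = real (k - 1) * real (k - 2) * real (k - 3) / (real (d - 1) * real (d - 2) * real (d - 3))"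
  define Dc where "Dc = (real (d - 1) * real (d - 2)) / (real (k - 1) * real (k - 2))"
  define Ec where "Ec = real (d - 1) / real (k - 1)"
  have l1p: "l1norm d w > 0" using l1norm_pos[OF wnz] .
  have qnn: "0 \<le> q a" for a using l1p by (simp add: q_def)
  have qsum: "(\<Sum>a\<in>{1..d}. q a) = 1"
    using l1p by (simp add: q_def sum_divide_distrib[symmetric] l1norm_def)
  have rk: "real (k - 1) = real k - 1" "real (k - 2) = real k - 2" "real (k - 3) = real k - 3"
    using k3 by (auto simp: of_nat_diff)
  have rd: "real (d - 1) = real d - 1" "real (d - 2) = real d - 2" "real (d - 3) = real d - 3"
    using kd3 k3 by (auto simp: of_nat_diff)
  have K3: "3 \<le> real k" "real k + 3 \<le> real d" using k3 kd3 by linarith+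
  note CI = consts_ineq[OF K3]
  have a1e: "a1 = (real k - 1) / (real d - 1)" unfolding a1_def rk rd by (rule refl)
  have a2e: "a2 = (real k - 1) * (real k - 2) / ((real d - 1) * (real d - 2))" unfolding a2_def rk rd by (rule refl)
  have a3e: "a3 = (real k - 1) * (real k - 2) * (real k - 3) / ((real d - 1) * (real d - 2) * (real d - 3))"
    unfolding a3_def rk rd by (rule refl)
  have c_a2p: "0 < a2" and c_a21: "a2 \<le> a1" and c_a1le: "a1 \<le> 1" and c_a3n: "0 \<le> a3"
    and c_a32: "a3 \<le> a2" and c_c1: "a1 * a3 \<le> a2 ^ 2" and c_c2: "(2 * a1 - 1) * a2 \<le> a3"
    and c_c3: "(2 * a1 - 1) * a1 \<le> a2"
    using CI unfolding a1e[symmetric] a2e[symmetric] a3e[symmetric] by auto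
  have Dce: "Dc = 1 / a2" by (simp add: Dc_def a2_def)
  have Ece: "Ec = 1 / a1" by (simp add: Ec_def a1_def)
  have GV: "G (d-1) (k-1) 0 = 1" "G (d-1) (k-1) 1 = a1" "G (d-1) (k-1) 2 = a2" "G (d-1) (k-1) 3 = a3"
  proof -
    have h: "2 \<le> k - 1" "k - 1 + 3 \<le> d - 1" using k3 kd3 by auto
    have e: "k - 1 - 1 = k - 2" "k - 1 - 2 = k - 3" "d - 1 - 1 = d - 2" "d - 1 - 2 = d - 3" by auto
    show "G (d-1) (k-1) 0 = 1" "G (d-1) (k-1) 1 = a1" "G (d-1) (k-1) 2 = a2" "G (d-1) (k-1) 3 = a3"
      using G_vals[OF h] unfolding e a1_def a2_def a3_def by auto
  qed
  have PrF: "Pr T = G (d-1) (k-1) (card T) + (\<Sum>a\<in>T. q a) * (G (d-1) (k-1) (card T - 1) - G (d-1) (k-1) (card T))"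
    if "T \<subseteq> {1..d}" for T
  proof -
    have "Pr T = (\<Sum>a\<in>{1..d}. q a * G (d-1) (k-1) (card (T - {a})))"
      unfolding Pr_def M_def q_def by (rule prob_formula[OF wnz that kd])
    also have "\<dots> = G (d-1) (k-1) (card T) + (\<Sum>a\<in>T. q a) * (G (d-1) (k-1) (card T - 1) - G (d-1) (k-1) (card T))"
      by (rule sum_split[OF _ that qsum]) simp
    finally show ?thesis .
  qed
  have P1: "Pr {j} = a1 + q j * (1 - a1)" if "j \<in> {1..d}" for j
    using PrF[of "{j}"] that GV by simp
  have P2: "Pr {j, l} = a2 + (q j + q l) * (a1 - a2)" if "j \<in> {1..d}" "l \<in> {1..d}" "j \<noteq> l" for j l
    using PrF[of "{j, l}"] that GV by (simp add: numeral_2_eq_2)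
  have P3: "Pr {j, l, m} = a3 + (q j + q l + q m) * (a2 - a3)"
    if "j \<in> {1..d}" "l \<in> {1..d}" "m \<in> {1..d}" "j \<noteq> l" "j \<noteq> m" "l \<noteq> m" for j l m
    using PrF[of "{j, l, m}"] that GV by (simp add: numeral_2_eq_2 numeral_3_eq_3 algebra_simps)
  have qle3: "q j + q l + q m \<le> 1"
    if "j \<in> {1..d}" "l \<in> {1..d}" "m \<in> {1..d}" "j \<noteq> l" "j \<noteq> m" "l \<noteq> m" for j l m
  proof -
    have "(\<Sum>a\<in>{j, l, m}. q a) \<le> (\<Sum>a\<in>{1..d}. q a)"
      by (rule sum_mono2) (use that qnn in auto)
    then show ?thesis using that qsum by simp
  qed
  define p where "p j = Pr {i, j}" for j
  have pi1: "p i = Pr {i}" by (simp add: p_def)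
  have pi_ge: "a1 \<le> p i" using P1[OF iD] qnn[of i] c_a1le unfolding pi1 by simp
  have p_ge: "a2 \<le> p j" if "j \<in> {1..d}" for j
  proof (cases "j = i")
    case True then show ?thesis using pi_ge c_a21 by simp
  next
    case False
    have "0 \<le> (q i + q j) * (a1 - a2)" using qnn c_a21 by simp
    then show ?thesis using P2[OF iD that] False by (simp add: p_def)
  qed
  have p_le: "p j \<le> 1" for j by (simp add: p_def Pr_def)
  have pp: "0 < p j" if "j \<in> {1..d}" for j using p_ge[OF that] c_a2p by simp
  have Dc1: "1 \<le> Dc" using c_a2p c_a21 c_a1le by (simp add: Dce)
  have invp: "1 / p j \<le> Dc" "1 \<le> 1 / p j" if "j \<in> {1..d}" for j
    using p_ge[OF that] pp[OF that] p_le[of j] c_a2p by (auto simp: Dce divide_simps)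
  have invpi: "1 / p i \<le> Ec" using pi_ge pp[OF iD] c_a2p c_a21 by (auto simp: Ece divide_simps)
  define e where "e j B = (if {i, j} \<subseteq> B then 1 else 0 :: real)" for j B
  define c where "c j = x i * x j * v j" for j
  define f where "f j B = e j B / p j - 1" for j B
  have PrS2: "Pr {a, b} = measure_pmf.prob M {C. a \<in> C \<and> b \<in> C}" for a b
    unfolding Pr_def by (rule arg_cong[where f="measure_pmf.prob M"]) auto
  have PrS1: "Pr {a} = measure_pmf.prob M {C. a \<in> C}" for a
    unfolding Pr_def by (rule arg_cong[where f="measure_pmf.prob M"]) auto
  have hm: "hmat k d w x B i j * v j - x i * x j * v j = c j * f j B" for j B
  proof (cases "i = j")
    case True
    have "p j = measure_pmf.prob (SAMPLING k d w) {C. i \<in> C}" using True PrS1 by (simp add: p_def M_def)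
    then show ?thesis using True unfolding hmat_def c_def f_def e_def
      by (simp add: power2_eq_square algebra_simps)
  next
    case False
    have "p j = measure_pmf.prob (SAMPLING k d w) {C. i \<in> C \<and> j \<in> C}" using PrS2 by (simp add: p_def M_def)
    then show ?thesis using False unfolding hmat_def c_def f_def e_def
      by (simp add: algebra_simps)
  qed
  have zv: "zvec k d w x v B i = (\<Sum>j\<in>{1..d}. c j * f j B)" for B
    unfolding zvec_def hm[symmetric]
    by (simp add: sum_subtractf sum_distrib_left mult.assoc)
  have cb: "\<bar>c j\<bar> \<le> \<bar>v j\<bar>" if "j \<in> {1..d}" for j
  proof -
    have "\<bar>x i * x j\<bar> \<le> 1" using xb iD that by (simp add: abs_mult mult_le_one)
    then have "\<bar>x i * x j\<bar> * \<bar>v j\<bar> \<le> 1 * \<bar>v j\<bar>" by (intro mult_right_mono) auto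
    then show ?thesis by (simp add: c_def abs_mult)
  qed
  have fb: "\<bar>f j B\<bar> \<le> Dc" if "j \<in> {1..d}" for j B
    using invp[OF that] Dc1 by (auto simp: f_def e_def)
  have part1: "\<bar>zvec k d w x v B i\<bar> \<le> Dc * l1norm d v" for B
  proof -
    have "\<bar>zvec k d w x v B i\<bar> \<le> (\<Sum>j\<in>{1..d}. \<bar>c j * f j B\<bar>)" unfolding zv by (rule sum_abs)
    also have "\<dots> \<le> (\<Sum>j\<in>{1..d}. \<bar>v j\<bar> * Dc)"
      by (rule sum_mono) (use cb fb in \<open>auto simp: abs_mult intro!: mult_mono\<close>)
    also have "\<dots> = Dc * l1norm d v" by (simp add: l1norm_def sum_distrib_left mult.commute)
    finally show ?thesis .
  qed
  have fin: "finite (set_pmf M)"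
  proof -
    have sp: "a \<in> {1..d}" if "a \<in> set_pmf (first_index d w)" for a
      using that pmf_first[OF wnz, of a] by (auto simp: set_pmf_iff split: if_splits)
    have "set_pmf M \<subseteq> Pow {1..d}"
    proof
      fix B assume "B \<in> set_pmf M"
      then obtain a where a: "a \<in> set_pmf (first_index d w)"
        and B: "B \<in> set_pmf (map_pmf (insert a) (pmf_of_set {S. S \<subseteq> {1..d} - {a} \<and> card S = k - 1}))"
        unfolding M_def SAMPLING_def by auto
      have aD: "a \<in> {1..d}" using sp[OF a] .
      define X where "X = {S. S \<subseteq> {1..d} - {a} \<and> card S = k - 1}"
      have fX: "finite X" unfolding X_def
        by (rule finite_subset[OF _ finite_Collect_subsets[of "{1..d} - {a}"]]) auto
      have cX: "card X = (d - 1) choose (k - 1)" unfolding X_def using aD by (simp add: n_subsets)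
      have "0 < (d - 1) choose (k - 1)" using kd by simp
      then have Xne: "X \<noteq> {}" using cX by auto
      from B obtain S where "S \<in> X" "B = insert a S" unfolding X_def[symmetric] using fX Xne by auto
      then show "B \<in> Pow {1..d}" using aD by (auto simp: X_def)
    qed
    then show ?thesis by (rule finite_subset) simp
  qed
  have intg: "integrable (measure_pmf M) g" for g :: "nat set \<Rightarrow> real"
    by (rule integrable_measure_pmf_finite[OF fin])
  have Ef: "measure_pmf.expectation M (\<lambda>B. f j B * f l B) = Pr {i, j, l} / (p j * p l) - 1"
    if "j \<in> {1..d}" "l \<in> {1..d}" for j l
  proof -
    have pj: "p j \<noteq> 0" and pl: "p l \<noteq> 0" using pp[OF that(1)] pp[OF that(2)] by auto
    have eq: "(\<lambda>B. f j B * f l B) = (\<lambda>B. indicator {C. {i, j, l} \<subseteq> C} B / (p j * p l)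
        - indicator {C. {i, j} \<subseteq> C} B / p j - indicator {C. {i, l} \<subseteq> C} B / p l + 1)"
      by (rule ext) (simp add: f_def e_def indicator_def field_simps pj pl)
    have "measure_pmf.expectation M (\<lambda>B. f j B * f l B)
        = measure_pmf.expectation M (indicator {C. {i, j, l} \<subseteq> C}) / (p j * p l)
          - measure_pmf.expectation M (indicator {C. {i, j} \<subseteq> C}) / p j
          - measure_pmf.expectation M (indicator {C. {i, l} \<subseteq> C}) / p l + 1"
      unfolding eq by (simp add: intg del: insert_subset)
    also have "\<dots> = Pr {i, j, l} / (p j * p l) - p j / p j - p l / p l + 1"
      by (simp only: Bochner_Integration.integral_indicator space_measure_pmf Int_UNIV_right Pr_def p_def)
    also have "\<dots> = Pr {i, j, l} / (p j * p l) - 1" using pj pl by simp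
    finally show ?thesis .
  qed
  have Roff: "\<bar>Pr {i, j, l} / (p j * p l) - 1\<bar> \<le> Ec - 1"
    if jD: "j \<in> {1..d}" and lD: "l \<in> {1..d}" and jl: "j \<noteq> l" for j l
  proof (cases "j = i")
    case True
    have "Pr {i, j, l} = p l" using True by (simp add: p_def)
    then have "Pr {i, j, l} / (p j * p l) = 1 / p i" using True pp[OF lD] by simp
    then show ?thesis using invpi invp(2)[OF iD] by simp
  next
    case False
    show ?thesis
    proof (cases "l = i")
      case True
      have "{i, j, l} = {i, j}" using True by auto
      then have "Pr {i, j, l} = p j" by (simp add: p_def)
      then have "Pr {i, j, l} / (p j * p l) = 1 / p i" using True pp[OF jD] by simp
      then show ?thesis using invpi invp(2)[OF iD] by simp
    next
      case False2: False
      have e3: "Pr {i, j, l} = a3 + (q i + q j + q l) * (a2 - a3)"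
        using P3[OF iD jD lD] False False2 jl by auto
      have ej: "p j = a2 + (q i + q j) * (a1 - a2)" using P2[OF iD jD] False by (auto simp: p_def)
      have el: "p l = a2 + (q i + q l) * (a1 - a2)" using P2[OF iD lD] False2 by (auto simp: p_def)
      have "q i + q j + q l \<le> 1" using qle3[OF iD jD lD] False False2 jl by auto
      then show ?thesis unfolding e3 ej el Ece
        by (intro ratio_bounds[OF c_a2p c_a21 c_a1le c_a3n c_a32 c_c1 c_c2 c_c3 qnn qnn qnn])
    qed
  qed
  have Tb: "c j * c l * (Pr {i, j, l} / (p j * p l) - 1)
      \<le> (if j = l then (Dc - 1) * (v j)\<^sup>2 else (Ec - 1) * (\<bar>v j\<bar> * \<bar>v l\<bar>))"
    if jD: "j \<in> {1..d}" and lD: "l \<in> {1..d}" for j l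
  proof (cases "j = l")
    case True
    have "Pr {i, j, l} / (p j * p l) - 1 = 1 / p j - 1" using True pp[OF jD] by (simp add: p_def)
    moreover have "c j * c j \<le> (v j)\<^sup>2" using cb[OF jD]
      by (metis abs_mult_self_eq abs_ge_zero mult_mono power2_eq_square)
    moreover have "0 \<le> 1 / p j - 1" "1 / p j - 1 \<le> Dc - 1" using invp[OF jD] by auto
    ultimately have "c j * c j * (1 / p j - 1) \<le> (v j)\<^sup>2 * (Dc - 1)"
      by (intro mult_mono) auto
    with \<open>Pr {i, j, l} / (p j * p l) - 1 = 1 / p j - 1\<close> show ?thesis using True by (simp add: mult.commute)
  next
    case False
    have "c j * c l * (Pr {i, j, l} / (p j * p l) - 1) \<le> \<bar>c j * c l * (Pr {i, j, l} / (p j * p l) - 1)\<bar>"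
      by simp
    also have "\<dots> = \<bar>c j\<bar> * \<bar>c l\<bar> * \<bar>Pr {i, j, l} / (p j * p l) - 1\<bar>" by (simp add: abs_mult)
    also have "\<dots> \<le> \<bar>v j\<bar> * \<bar>v l\<bar> * (Ec - 1)"
      using cb[OF jD] cb[OF lD] Roff[OF jD lD False] by (intro mult_mono) auto
    finally show ?thesis using False by (simp add: mult.commute)
  qed
  have z2: "(zvec k d w x v B i)\<^sup>2 = (\<Sum>j\<in>{1..d}. \<Sum>l\<in>{1..d}. (c j * c l) * (f j B * f l B))" for B
    unfolding zv power2_eq_square sum_product by (simp add: mult_ac)
  have "measure_pmf.expectation M (\<lambda>B. (zvec k d w x v B i)\<^sup>2)
      = (\<Sum>j\<in>{1..d}. \<Sum>l\<in>{1..d}. (c j * c l) * measure_pmf.expectation M (\<lambda>B. f j B * f l B))"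
    unfolding z2 by (simp add: intg)
  also have "\<dots> = (\<Sum>j\<in>{1..d}. \<Sum>l\<in>{1..d}. c j * c l * (Pr {i, j, l} / (p j * p l) - 1))"
    by (intro sum.cong refl) (simp add: Ef)
  also have "\<dots> \<le> (\<Sum>j\<in>{1..d}. \<Sum>l\<in>{1..d}.
      (if j = l then (Dc - 1) * (v j)\<^sup>2 else (Ec - 1) * (\<bar>v j\<bar> * \<bar>v l\<bar>)))"
    by (intro sum_mono) (simp add: Tb)
  also have "\<dots> = (Dc - 1) * l2norm_sq d v + (Ec - 1) * ((l1norm d v)\<^sup>2 - l2norm_sq d v)"
  proof -
    have inner: "(\<Sum>l\<in>{1..d}. (if j = l then (Dc - 1) * (v j)\<^sup>2 else (Ec - 1) * (\<bar>v j\<bar> * \<bar>v l\<bar>)))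
        = (Dc - 1) * (v j)\<^sup>2 + (Ec - 1) * \<bar>v j\<bar> * (l1norm d v - \<bar>v j\<bar>)" if jD: "j \<in> {1..d}" for j
    proof -
      have "(\<Sum>l\<in>{1..d}. (if j = l then (Dc - 1) * (v j)\<^sup>2 else (Ec - 1) * (\<bar>v j\<bar> * \<bar>v l\<bar>)))
          = (\<Sum>l\<in>{1..d}. (Ec - 1) * \<bar>v j\<bar> * \<bar>v l\<bar> + (if j = l then (Dc - 1) * (v j)\<^sup>2 - (Ec - 1) * \<bar>v j\<bar> * \<bar>v j\<bar> else 0))"
        by (intro sum.cong refl) auto
      also have "\<dots> = (Ec - 1) * \<bar>v j\<bar> * l1norm d v + ((Dc - 1) * (v j)\<^sup>2 - (Ec - 1) * \<bar>v j\<bar> * \<bar>v j\<bar>)"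
        using jD by (simp add: sum.distrib sum_distrib_left l1norm_def)
      finally show ?thesis by (simp add: algebra_simps)
    qed
    have "(\<Sum>j\<in>{1..d}. \<Sum>l\<in>{1..d}.
      (if j = l then (Dc - 1) * (v j)\<^sup>2 else (Ec - 1) * (\<bar>v j\<bar> * \<bar>v l\<bar>)))
      = (\<Sum>j\<in>{1..d}. (Dc - 1) * (v j)\<^sup>2 + (Ec - 1) * (\<bar>v j\<bar> * l1norm d v - (v j)\<^sup>2))"
    proof (intro sum.cong refl)
      fix j assume jD: "j \<in> {1..d}"
      show "(\<Sum>l\<in>{1..d}. (if j = l then (Dc - 1) * (v j)\<^sup>2 else (Ec - 1) * (\<bar>v j\<bar> * \<bar>v l\<bar>)))
        = (Dc - 1) * (v j)\<^sup>2 + (Ec - 1) * (\<bar>v j\<bar> * l1norm d v - (v j)\<^sup>2)"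
        unfolding inner[OF jD] by (simp add: algebra_simps power2_eq_square)
    qed
    also have "\<dots> = (Dc - 1) * l2norm_sq d v + (Ec - 1) * ((l1norm d v)\<^sup>2 - l2norm_sq d v)"
    proof -
      define L where "L = l1norm d v"
      have "(\<Sum>j\<in>{1..d}. (Dc - 1) * (v j)\<^sup>2 + (Ec - 1) * (\<bar>v j\<bar> * L - (v j)\<^sup>2))
          = (Dc - 1) * (\<Sum>j\<in>{1..d}. (v j)\<^sup>2) + (Ec - 1) * ((\<Sum>j\<in>{1..d}. \<bar>v j\<bar>) * L - (\<Sum>j\<in>{1..d}. (v j)\<^sup>2))"
        by (simp add: sum.distrib sum_subtractf sum_distrib_left sum_distrib_right algebra_simps)
      then show ?thesis unfolding L_def l2norm_sq_def l1norm_def power2_eq_square .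
    qed
    finally show ?thesis .
  qed
  finally have part2: "measure_pmf.expectation M (\<lambda>B. (zvec k d w x v B i)\<^sup>2)
      \<le> (Dc - 1) * l2norm_sq d v + (Ec - 1) * ((l1norm d v)\<^sup>2 - l2norm_sq d v)" .
  show ?thesis using part1 part2 unfolding M_def Dc_def Ec_def by auto
qed

end
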